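(* Let $\mathbf{X}$ be a finite collection of discrete random variables, and let $B_1,\dots,B_m$ be buckets with associated variable sets $\mathbf{X}_{B_1},\dots,\mathbf{X}_{B_m}\subseteq\mathbf{X}$ that are pairwise disjoint. Let $\mathbf{X}'=\mathbf{X}\setminus\bigcup_{B}\mathbf{X}_B$. Let $p(\mathbf{X})$ be the distribution of a normalized, smooth, decomposable probabilistic circuit, written as a discrete mixture $$p(\mathbf{x})=\sum_{z}p(z)\prod_{B}p_z(\mathbf{x}_B)\prod_{X_i\in\mathbf{X}'}p_z(x_i),$$ where $Z$ is the discrete latent variable induced by the sum nodes, $p(z)$ is its distribution, each $p_z(\mathbf{X}_B)$ is a categorical distribution over $\mathbf{X}_B$ and each $p_z(X_i)$ is a univariate distribution. Let $q(\mathbf{X})$ be a distribution of the same form $$q(\mathbf{x})=\sum_{z}p(z)\prod_{B}q_z(\mathbf{x}_B)\prod_{X_i\in\mathbf{X}'}p_z(x_i),$$ where each $q_z(\mathbf{X}_B)$ is a categorical distribution over $\mathbf{X}_B$. Then $$H\big(p(\mathbf{X}),q(\mathbf{X})\big)\;\le\;\sum_{B}\mathbb{E}_{z\sim p(Z)}\Big[H\big(p_z(\mathbf{X}_B),q_z(\mathbf{X}_B)\big)\Big]+H\big(p(\mathbf{X}',Z)\big),$$ where $p(\mathbf{x}',z)=p(z)\prod_{X_i\in\mathbf{X}'}p_z(x_i)$.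
   Context: $H(p,q)=-\sum_{\mathbf{x}}p(\mathbf{x})\log q(\mathbf{x})$ denotes cross entropy and $H(p)$ denotes entropy. The buckets arise from linear probabilistic propositional logic constraints of the form $\sum_{i_c}\tau_{i_c}\,p(F_{i_c})\le\alpha_c$, where each $F_{i_c}$ is a propositional formula over Boolean variables $\mathbf{X}_c\subseteq\mathbf{X}$; constraints sharing variables are grouped into the same bucket $B$, and $\mathbf{X}_B=\bigcup_{c\in B}\mathbf{X}_c$, so distinct buckets have disjoint variable sets. The circuit is assumed to keep all variables of a bucket together: for every node $v$ and bucket $B$, if $\mathbf{X}_B\cap\mathrm{scope}(v)\neq\emptyset$ then $\mathbf{X}_B\subseteq\mathrm{scope}(v)$, which yields the displayed mixture form of $p$ with components indexed by the states $z$ of the latent variable $Z$. *)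

theory Defs
  imports Complex_Main "HOL-Library.FuncSet" "HOL-Library.Extended_Real" "HOL-Library.Disjoint_Sets"
begin

text \<open>Cross entropy H(p,q) = - sum_w p(w) log q(w) of two finitely supported
  distributions over a finite outcome set, with the usual conventions
  0 log 0 = 0 (terms with p w = 0 vanish) and - p log 0 = +infinity for p > 0.
  Natural logarithm is used; the base is irrelevant for the inequality.\<close>
definition cross_entropy :: "'w set \<Rightarrow> ('w \<Rightarrow> real) \<Rightarrow> ('w \<Rightarrow> real) \<Rightarrow> ereal" where
  "cross_entropy \<Omega> p q =
     (\<Sum>w\<in>\<Omega>. if p w = 0 then 0
              else if q w = 0 then \<infinity>
              else ereal (- p w * ln (q w)))"

definition entropy :: "'w set \<Rightarrow> ('w \<Rightarrow> real) \<Rightarrow> ereal" where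
  "entropy \<Omega> p = cross_entropy \<Omega> p p"

definition is_distribution :: "'w set \<Rightarrow> ('w \<Rightarrow> real) \<Rightarrow> bool" where
  "is_distribution \<Omega> p \<longleftrightarrow> finite \<Omega> \<and> (\<forall>w\<in>\<Omega>. 0 \<le> p w) \<and> (\<Sum>w\<in>\<Omega>. p w) = 1"

definition mixture ::
  "'z set \<Rightarrow> ('z \<Rightarrow> real) \<Rightarrow> 'b set \<Rightarrow> ('b \<Rightarrow> 'v set) \<Rightarrow>
   ('z \<Rightarrow> 'b \<Rightarrow> ('v \<Rightarrow> 'a) \<Rightarrow> real) \<Rightarrow> 'v set \<Rightarrow> ('z \<Rightarrow> 'v \<Rightarrow> 'a \<Rightarrow> real) \<Rightarrow>
   ('v \<Rightarrow> 'a) \<Rightarrow> real" where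
  "mixture Zs pz Bs XB pB X' pu x =
     (\<Sum>z\<in>Zs. pz z * (\<Prod>b\<in>Bs. pB z b (restrict x (XB b))) * (\<Prod>i\<in>X'. pu z i (x i)))"

end

theory Submission
  imports Defs
begin

lemma sum_PiE_Un:
  fixes F H :: "('v \<Rightarrow> 'a) \<Rightarrow> real"
  assumes disj: "A \<inter> B = {}" and fin: "finite (PiE A D)" "finite (PiE B D)"
  shows "(\<Sum>x\<in>PiE (A \<union> B) D. F (restrict x A) * H (restrict x B))
       = (\<Sum>y\<in>PiE A D. F y) * (\<Sum>y\<in>PiE B D. H y)"
proof -
  have "(\<Sum>x\<in>PiE (A \<union> B) D. F (restrict x A) * H (restrict x B))
      = (\<Sum>(f,g)\<in>PiE A D \<times> PiE B D. F f * H g)"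
    using disj
    by (intro sum.reindex_bij_witness[of _ "\<lambda>(f,g). (\<lambda>v. if v \<in> A then f v else g v)"
          "\<lambda>x. (restrict x A, restrict x B)"])
       (auto simp: PiE_def extensional_def Pi_def restrict_def fun_eq_iff split: if_splits)
  also have "\<dots> = (\<Sum>y\<in>PiE A D. F y) * (\<Sum>y\<in>PiE B D. H y)"
    by (simp add: sum_product sum.cartesian_product)
  finally show ?thesis .
qed

lemma finite_PiE_D: "finite S \<Longrightarrow> (\<And>i. i \<in> S \<Longrightarrow> finite (D i)) \<Longrightarrow> finite (PiE S D)"
  by (rule finite_PiE)

lemma sum_PiE_blocks:
  fixes G :: "'k \<Rightarrow> ('v \<Rightarrow> 'a) \<Rightarrow> real"
  assumes "finite K" "disjoint_family_on A K" "\<And>k. k \<in> K \<Longrightarrow> finite (A k)"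
    "\<And>k i. k \<in> K \<Longrightarrow> i \<in> A k \<Longrightarrow> finite (D i)"
  shows "(\<Sum>x\<in>PiE (\<Union>k\<in>K. A k) D. \<Prod>k\<in>K. G k (restrict x (A k)))
       = (\<Prod>k\<in>K. \<Sum>y\<in>PiE (A k) D. G k y)"
  using assms
proof (induction K rule: finite_induct)
  case empty
  then show ?case by simp
next
  case (insert k K)
  let ?U = "\<Union>j\<in>K. A j"
  have disj: "A k \<inter> ?U = {}"
    using insert.prems(1) insert.hyps(2) unfolding disjoint_family_on_def by fastforce
  have eq: "(\<Union>j\<in>insert k K. A j) = A k \<union> ?U" by simp
  have r: "?U \<inter> A j = A j" if "j \<in> K" for j
    using that by auto
  have "(\<Sum>x\<in>PiE (\<Union>j\<in>insert k K. A j) D. \<Prod>j\<in>insert k K. G j (restrict x (A j)))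
     = (\<Sum>x\<in>PiE (A k \<union> ?U) D. G k (restrict x (A k)) *
          (\<lambda>y. \<Prod>j\<in>K. G j (restrict y (A j))) (restrict x ?U))"
    unfolding eq using insert.hyps by (intro sum.cong refl) (simp add: r cong: prod.cong)
  also have "\<dots> = (\<Sum>y\<in>PiE (A k) D. G k y) * (\<Sum>y\<in>PiE ?U D. \<Prod>j\<in>K. G j (restrict y (A j)))"
    by (rule sum_PiE_Un[OF disj]) (use insert.prems insert.hyps in \<open>auto intro!: finite_PiE\<close>)
  also have "(\<Sum>y\<in>PiE ?U D. \<Prod>j\<in>K. G j (restrict y (A j))) = (\<Prod>j\<in>K. \<Sum>y\<in>PiE (A j) D. G j y)"
    using insert.prems by (intro insert.IH) (auto intro: disjoint_family_on_mono)
  finally show ?case using insert.hyps by simp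
qed

lemma sum_PiE_factor:
  fixes F :: "('v \<Rightarrow> 'a) \<Rightarrow> real" and G :: "'k \<Rightarrow> ('v \<Rightarrow> 'a) \<Rightarrow> real"
  assumes "finite K" "disjoint_family_on A K" "\<And>k. k \<in> K \<Longrightarrow> finite (A k)" "finite C"
    "C \<inter> (\<Union>k\<in>K. A k) = {}" "\<And>i. i \<in> C \<union> (\<Union>k\<in>K. A k) \<Longrightarrow> finite (D i)"
  shows "(\<Sum>x\<in>PiE (C \<union> (\<Union>k\<in>K. A k)) D. F (restrict x C) * (\<Prod>k\<in>K. G k (restrict x (A k))))
       = (\<Sum>y\<in>PiE C D. F y) * (\<Prod>k\<in>K. \<Sum>y\<in>PiE (A k) D. G k y)"
proof -
  let ?U = "\<Union>k\<in>K. A k"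
  have r: "?U \<inter> A j = A j" if "j \<in> K" for j
    using that by auto
  have "(\<Sum>x\<in>PiE (C \<union> ?U) D. F (restrict x C) * (\<Prod>k\<in>K. G k (restrict x (A k))))
      = (\<Sum>x\<in>PiE (C \<union> ?U) D. F (restrict x C) * (\<lambda>y. \<Prod>k\<in>K. G k (restrict y (A k))) (restrict x ?U))"
    by (intro sum.cong refl) (simp add: r cong: prod.cong)
  also have "\<dots> = (\<Sum>y\<in>PiE C D. F y) * (\<Sum>y\<in>PiE ?U D. \<Prod>k\<in>K. G k (restrict y (A k)))"
    by (rule sum_PiE_Un) (use assms in \<open>auto intro!: finite_PiE\<close>)
  also have "(\<Sum>y\<in>PiE ?U D. \<Prod>k\<in>K. G k (restrict y (A k))) = (\<Prod>k\<in>K. \<Sum>y\<in>PiE (A k) D. G k y)"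
    by (rule sum_PiE_blocks) (use assms in auto)
  finally show ?thesis .
qed

definition ceT :: "real \<Rightarrow> real \<Rightarrow> ereal" where
  "ceT a b = (if a = 0 then 0 else if b = 0 then \<infinity> else ereal (- a * ln b))"

lemma ceT_pointwise:
  assumes "finite Z" "\<And>z. z \<in> Z \<Longrightarrow> 0 \<le> P z" "\<And>z. z \<in> Z \<Longrightarrow> 0 \<le> Q z"
  shows "ceT (\<Sum>z\<in>Z. P z) (\<Sum>z\<in>Z. Q z) \<le> (\<Sum>z\<in>Z. ceT (P z) (Q z))"
proof (cases "(\<Sum>z\<in>Z. P z) = 0")
  case True
  then have "\<forall>z\<in>Z. P z = 0" using assms sum_nonneg_eq_0_iff by blast
  then show ?thesis using True by (simp add: ceT_def)
next
  case Pnz: False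
  then obtain z0 where z0: "z0 \<in> Z" "P z0 \<noteq> 0" by (meson sum.neutral)
  show ?thesis
  proof (cases "\<exists>z\<in>Z. ceT (P z) (Q z) = \<infinity>")
    case True
    then have "(\<Sum>z\<in>Z. ceT (P z) (Q z)) = \<infinity>" using assms(1) by (simp add: sum_Pinfty)
    then show ?thesis by simp
  next
    case False
    then have nz: "Q z \<noteq> 0" if "z \<in> Z" "P z \<noteq> 0" for z
      using that by (auto simp: ceT_def)
    have Qpos: "0 < Q z0" using nz[OF z0] z0 assms(3)[of z0] by linarith
    have sQ: "Q z0 \<le> (\<Sum>z\<in>Z. Q z)"
      by (rule member_le_sum) (use assms z0 in auto)
    have "(\<Sum>z\<in>Z. ceT (P z) (Q z)) = (\<Sum>z\<in>Z. ereal (- P z * ln (Q z)))"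
      by (intro sum.cong refl) (use nz in \<open>auto simp: ceT_def\<close>)
    also have "\<dots> = ereal (\<Sum>z\<in>Z. - P z * ln (Q z))" by simp
    finally have R: "(\<Sum>z\<in>Z. ceT (P z) (Q z)) = ereal (\<Sum>z\<in>Z. - P z * ln (Q z))" .
    have L: "ceT (\<Sum>z\<in>Z. P z) (\<Sum>z\<in>Z. Q z) = ereal (- (\<Sum>z\<in>Z. P z) * ln (\<Sum>z\<in>Z. Q z))"
      using Pnz Qpos sQ by (simp add: ceT_def)
    have "P z * ln (Q z) \<le> P z * ln (\<Sum>z\<in>Z. Q z)" if "z \<in> Z" for z
    proof (cases "P z = 0")
      case False
      then have "0 < Q z" using nz[OF that] assms(3)[OF that] by linarith
      moreover have "Q z \<le> (\<Sum>z\<in>Z. Q z)"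
        by (rule member_le_sum) (use assms that in auto)
      ultimately show ?thesis using assms(2)[OF that] by (intro mult_left_mono) auto
    qed simp
    then have "(\<Sum>z\<in>Z. P z * ln (Q z)) \<le> (\<Sum>z\<in>Z. P z * ln (\<Sum>z\<in>Z. Q z))"
      by (rule sum_mono)
    then have "- (\<Sum>z\<in>Z. P z) * ln (\<Sum>z\<in>Z. Q z) \<le> (\<Sum>z\<in>Z. - P z * ln (Q z))"
      by (simp add: sum_distrib_right sum_negf)
    then show ?thesis unfolding L R by simp
  qed
qed

lemma entropy_real: "finite \<Omega> \<Longrightarrow> entropy \<Omega> p = ereal (\<Sum>w\<in>\<Omega>. - p w * ln (p w))"
  unfolding entropy_def cross_entropy_def sum_ereal[symmetric] by (intro sum.cong refl) auto

theorem theorem1: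
  fixes V :: "'v set" and D :: "'v \<Rightarrow> 'a set"
    and Bs :: "'b set" and XB :: "'b \<Rightarrow> 'v set"
    and Zs :: "'z set" and pz :: "'z \<Rightarrow> real"
    and pB qB :: "'z \<Rightarrow> 'b \<Rightarrow> ('v \<Rightarrow> 'a) \<Rightarrow> real"
    and pu :: "'z \<Rightarrow> 'v \<Rightarrow> 'a \<Rightarrow> real"
  defines "X' \<equiv> V - (\<Union>b\<in>Bs. XB b)"
  assumes finV: "finite V"
    and finD: "\<And>i. i \<in> V \<Longrightarrow> finite (D i)"
    and finBs: "finite Bs"
    and XB_sub: "\<And>b. b \<in> Bs \<Longrightarrow> XB b \<subseteq> V"
    and XB_disj: "disjoint_family_on XB Bs"
    and pz_dist: "is_distribution Zs pz"
    and pB_dist: "\<And>z b. z \<in> Zs \<Longrightarrow> b \<in> Bs \<Longrightarrow> is_distribution (PiE (XB b) D) (pB z b)"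
    and qB_dist: "\<And>z b. z \<in> Zs \<Longrightarrow> b \<in> Bs \<Longrightarrow> is_distribution (PiE (XB b) D) (qB z b)"
    and pu_dist: "\<And>z i. z \<in> Zs \<Longrightarrow> i \<in> X' \<Longrightarrow> is_distribution (D i) (pu z i)"
  shows "cross_entropy (PiE V D) (mixture Zs pz Bs XB pB X' pu) (mixture Zs pz Bs XB qB X' pu)
         \<le> (\<Sum>b\<in>Bs. \<Sum>z\<in>Zs. ereal (pz z) * cross_entropy (PiE (XB b) D) (pB z b) (qB z b))
           + entropy (PiE X' D \<times> Zs) (\<lambda>(x', z). pz z * (\<Prod>i\<in>X'. pu z i (x' i)))"
proof -
  define W where "W = PiE V D"
  define P where "P x z = pz z * (\<Prod>b\<in>Bs. pB z b (restrict x (XB b))) * (\<Prod>i\<in>X'. pu z i (x i))" for x z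
  define Q where "Q x z = pz z * (\<Prod>b\<in>Bs. qB z b (restrict x (XB b))) * (\<Prod>i\<in>X'. pu z i (x i))" for x z
  have finZ: "finite Zs" and pz0: "\<And>z. z \<in> Zs \<Longrightarrow> 0 \<le> pz z" and pz1: "(\<Sum>z\<in>Zs. pz z) = 1"
    using pz_dist by (auto simp: is_distribution_def)
  have pB0: "\<And>z b w. z \<in> Zs \<Longrightarrow> b \<in> Bs \<Longrightarrow> w \<in> PiE (XB b) D \<Longrightarrow> 0 \<le> pB z b w"
   and pB1: "\<And>z b. z \<in> Zs \<Longrightarrow> b \<in> Bs \<Longrightarrow> (\<Sum>w\<in>PiE (XB b) D. pB z b w) = 1"
    using pB_dist by (auto simp: is_distribution_def)
  have qB0: "\<And>z b w. z \<in> Zs \<Longrightarrow> b \<in> Bs \<Longrightarrow> w \<in> PiE (XB b) D \<Longrightarrow> 0 \<le> qB z b w"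
    using qB_dist by (auto simp: is_distribution_def)
  have pu0: "\<And>z i a. z \<in> Zs \<Longrightarrow> i \<in> X' \<Longrightarrow> a \<in> D i \<Longrightarrow> 0 \<le> pu z i a"
   and pu1: "\<And>z i. z \<in> Zs \<Longrightarrow> i \<in> X' \<Longrightarrow> (\<Sum>a\<in>D i. pu z i a) = 1"
    using pu_dist by (auto simp: is_distribution_def)
  have X'V: "X' \<subseteq> V" unfolding X'_def by blast
  have finX': "finite X'" using X'V finV finite_subset by blast
  have finXB: "\<And>b. b \<in> Bs \<Longrightarrow> finite (XB b)" using XB_sub finV finite_subset by blast
  have finW: "finite W" unfolding W_def using finV finD by (intro finite_PiE) auto
  have Veq: "V = X' \<union> (\<Union>b\<in>Bs. XB b)" using XB_sub unfolding X'_def by blast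
  have Xdisj: "X' \<inter> (\<Union>b\<in>Bs. XB b) = {}" unfolding X'_def by blast
  have finDall: "\<And>i. i \<in> X' \<union> (\<Union>b\<in>Bs. XB b) \<Longrightarrow> finite (D i)" using finD Veq by blast
  have rW: "restrict x (XB b) \<in> PiE (XB b) D" if "x \<in> W" "b \<in> Bs" for x b
    using that XB_sub unfolding W_def by (auto simp: PiE_iff)
  have xW: "x i \<in> D i" if "x \<in> W" "i \<in> X'" for x i
    using that X'V unfolding W_def by (auto simp: PiE_iff)
  have P0: "0 \<le> P x z" if "x \<in> W" "z \<in> Zs" for x z
    unfolding P_def using that pz0 pB0 rW pu0 xW
    by (intro mult_nonneg_nonneg prod_nonneg) auto
  have Q0: "0 \<le> Q x z" if "x \<in> W" "z \<in> Zs" for x z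
    unfolding Q_def using that pz0 qB0 rW pu0 xW
    by (intro mult_nonneg_nonneg prod_nonneg) auto
  have mixP: "mixture Zs pz Bs XB pB X' pu x = (\<Sum>z\<in>Zs. P x z)" for x
    unfolding mixture_def P_def ..
  have mixQ: "mixture Zs pz Bs XB qB X' pu x = (\<Sum>z\<in>Zs. Q x z)" for x
    unfolding mixture_def Q_def ..
  let ?LHS = "cross_entropy (PiE V D) (mixture Zs pz Bs XB pB X' pu) (mixture Zs pz Bs XB qB X' pu)"
  let ?S = "(\<Sum>b\<in>Bs. \<Sum>z\<in>Zs. ereal (pz z) * cross_entropy (PiE (XB b) D) (pB z b) (qB z b))"
  let ?R = "(\<lambda>(x', z). pz z * (\<Prod>i\<in>X'. pu z i (x' i)))"
  let ?E = "entropy (PiE X' D \<times> Zs) ?R"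
  have step1: "?LHS \<le> (\<Sum>x\<in>W. \<Sum>z\<in>Zs. ceT (P x z) (Q x z))"
    unfolding cross_entropy_def W_def[symmetric] mixP mixQ ceT_def[symmetric]
    by (intro sum_mono ceT_pointwise finZ) (auto intro: P0 Q0)
  show ?thesis
  proof (cases "\<exists>b\<in>Bs. \<exists>z\<in>Zs. \<exists>w\<in>PiE (XB b) D. pz z \<noteq> 0 \<and> pB z b w \<noteq> 0 \<and> qB z b w = 0")
    case True
    then obtain b z w where bzw: "b \<in> Bs" "z \<in> Zs" "w \<in> PiE (XB b) D" "pz z \<noteq> 0" "pB z b w \<noteq> 0" "qB z b w = 0"
      by blast
    have finPB: "finite (PiE (XB b) D)" using finXB[OF bzw(1)] finD XB_sub[OF bzw(1)] by (intro finite_PiE) auto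
    have "cross_entropy (PiE (XB b) D) (pB z b) (qB z b) = \<infinity>"
      unfolding cross_entropy_def using bzw finPB by (subst sum_Pinfty) auto
    then have "ereal (pz z) * cross_entropy (PiE (XB b) D) (pB z b) (qB z b) = \<infinity>"
      using pz0[OF bzw(2)] bzw(4) by simp
    then have "?S = \<infinity>" using bzw finZ finBs by (auto simp: sum_Pinfty)
    then show ?thesis by simp
  next
    case False
    define ce where "ce b z = (\<Sum>w\<in>PiE (XB b) D. - pB z b w * ln (qB z b w))" for b z
    have S_eq: "?S = ereal (\<Sum>b\<in>Bs. \<Sum>z\<in>Zs. pz z * ce b z)"
    proof -
      have "ereal (pz z) * cross_entropy (PiE (XB b) D) (pB z b) (qB z b) = ereal (pz z * ce b z)"
        if "b \<in> Bs" "z \<in> Zs" for b z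
      proof (cases "pz z = 0")
        case True
        then show ?thesis by (simp add: zero_ereal_def[symmetric])
      next
        case nz: False
        have "cross_entropy (PiE (XB b) D) (pB z b) (qB z b) = (\<Sum>w\<in>PiE (XB b) D. ereal (- pB z b w * ln (qB z b w)))"
          unfolding cross_entropy_def using False that nz by (intro sum.cong refl) auto
        then show ?thesis by (simp add: ce_def)
      qed
      then show ?thesis by (simp cong: sum.cong)
    qed
    have finR: "finite (PiE X' D \<times> Zs)" using finX' finZ finD X'V by (intro finite_cartesian_product finite_PiE) auto
    have E_eq: "?E = ereal (\<Sum>z\<in>Zs. \<Sum>x'\<in>PiE X' D. - ?R (x', z) * ln (?R (x', z)))"
      unfolding entropy_real[OF finR]
      by (subst sum.swap) (simp add: sum.cartesian_product split_beta)
    have QnzP: "Q x z \<noteq> 0" if "x \<in> W" "z \<in> Zs" "P x z \<noteq> 0" for x z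
    proof -
      have "pz z \<noteq> 0" "\<And>b. b \<in> Bs \<Longrightarrow> pB z b (restrict x (XB b)) \<noteq> 0"
           "\<And>i. i \<in> X' \<Longrightarrow> pu z i (x i) \<noteq> 0"
        using that(3) finBs finX' unfolding P_def by auto
      note h = this
      have "qB z b (restrict x (XB b)) \<noteq> 0" if "b \<in> Bs" for b
        using False h(2)[OF that] rW[OF \<open>x \<in> W\<close> that] h(1) \<open>z \<in> Zs\<close> that by blast
      then show ?thesis unfolding Q_def using h finBs finX' by auto
    qed
    have T_eq: "(\<Sum>x\<in>W. \<Sum>z\<in>Zs. ceT (P x z) (Q x z)) = ereal (\<Sum>x\<in>W. \<Sum>z\<in>Zs. - P x z * ln (Q x z))"
    proof -
      have "ceT (P x z) (Q x z) = ereal (- P x z * ln (Q x z))" if "x \<in> W" "z \<in> Zs" for x z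
        using QnzP[OF that] by (auto simp: ceT_def)
      then show ?thesis by (simp cong: sum.cong)
    qed
    have lnQ: "P x z * ln (Q x z) = P x z * (ln (pz z) + (\<Sum>b\<in>Bs. ln (qB z b (restrict x (XB b))))
                 + (\<Sum>i\<in>X'. ln (pu z i (x i))))" if "x \<in> W" "z \<in> Zs" for x z
    proof (cases "P x z = 0")
      case nz: False
      have a: "pz z \<noteq> 0" "\<And>b. b \<in> Bs \<Longrightarrow> pB z b (restrict x (XB b)) \<noteq> 0"
           "\<And>i. i \<in> X' \<Longrightarrow> pu z i (x i) \<noteq> 0"
        using nz finBs finX' unfolding P_def by auto
      have p1: "0 < pz z" using a pz0 that by force
      have p2: "0 < qB z b (restrict x (XB b))" if "b \<in> Bs" for b
        using a(2)[OF that] False qB0 rW \<open>x \<in> W\<close> \<open>z \<in> Zs\<close> that p1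
        by (metis order_le_neq_trans)
      have p3: "0 < pu z i (x i)" if "i \<in> X'" for i
        using a(3)[OF that] pu0 xW \<open>x \<in> W\<close> \<open>z \<in> Zs\<close> that by (metis order_le_neq_trans)
      have "ln (Q x z) = ln (pz z) + ln (\<Prod>b\<in>Bs. qB z b (restrict x (XB b))) + ln (\<Prod>i\<in>X'. pu z i (x i))"
      proof -
        have "0 < (\<Prod>b\<in>Bs. qB z b (restrict x (XB b)))" using p2 by (simp add: prod_pos)
        moreover have "0 < (\<Prod>i\<in>X'. pu z i (x i))" using p3 by (simp add: prod_pos)
        ultimately show ?thesis unfolding Q_def using p1 by (simp add: ln_mult)
      qed
      also have "\<dots> = ln (pz z) + (\<Sum>b\<in>Bs. ln (qB z b (restrict x (XB b)))) + (\<Sum>i\<in>X'. ln (pu z i (x i)))"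
        using ln_prod[OF finBs, of "\<lambda>b. qB z b (restrict x (XB b))"] ln_prod[OF finX', of "\<lambda>i. pu z i (x i)"] p2 p3
        by force
      finally show ?thesis by simp
    qed simp
    have norm': "(\<Sum>y\<in>PiE X' D. \<Prod>i\<in>X'. pu z i (y i)) = 1" if "z \<in> Zs" for z
    proof -
      have "(\<Sum>y\<in>PiE X' D. \<Prod>i\<in>X'. pu z i (y i)) = (\<Prod>i\<in>X'. \<Sum>a\<in>D i. pu z i a)"
        using finX' finD X'V by (subst prod_sum_PiE) auto
      also have "\<dots> = 1" using pu1 that by simp
      finally show ?thesis .
    qed
    have fac: "(\<Sum>x\<in>W. F (restrict x X') * (\<Prod>b\<in>Bs. G b (restrict x (XB b))))
        = (\<Sum>y\<in>PiE X' D. F y) * (\<Prod>b\<in>Bs. \<Sum>y\<in>PiE (XB b) D. G b y)" for F :: "('v \<Rightarrow> 'a) \<Rightarrow> real" and G :: "'b \<Rightarrow> ('v \<Rightarrow> 'a) \<Rightarrow> real"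
      unfolding W_def Veq using finBs XB_disj finXB finX' Xdisj finDall
      by (intro sum_PiE_factor) auto
    have pur: "(\<Prod>i\<in>X'. pu z i (x i)) = (\<Prod>i\<in>X'. pu z i (restrict x X' i))" for x z
      by (intro prod.cong) auto
    have blockA: "(\<Sum>x\<in>W. P x z * ln (qB z b0 (restrict x (XB b0)))) = - (pz z * ce b0 z)"
      if "z \<in> Zs" "b0 \<in> Bs" for z b0
    proof -
      define G where "G b = (if b = b0 then (\<lambda>w. pB z b w * ln (qB z b w)) else pB z b)" for b
      have "P x z * ln (qB z b0 (restrict x (XB b0)))
          = pz z * ((\<lambda>y. \<Prod>i\<in>X'. pu z i (y i)) (restrict x X') * (\<Prod>b\<in>Bs. G b (restrict x (XB b))))" for x
      proof -
        have "(\<Prod>b\<in>Bs. G b (restrict x (XB b))) = G b0 (restrict x (XB b0)) * (\<Prod>b\<in>Bs - {b0}. G b (restrict x (XB b)))"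
          using that finBs by (simp add: prod.remove)
        also have "(\<Prod>b\<in>Bs - {b0}. G b (restrict x (XB b))) = (\<Prod>b\<in>Bs - {b0}. pB z b (restrict x (XB b)))"
          by (intro prod.cong) (auto simp: G_def)
        finally have "(\<Prod>b\<in>Bs. G b (restrict x (XB b))) = G b0 (restrict x (XB b0)) * (\<Prod>b\<in>Bs - {b0}. pB z b (restrict x (XB b)))" .
        moreover have "G b0 w = pB z b0 w * ln (qB z b0 w)" for w by (simp add: G_def)
        ultimately have "(\<Prod>b\<in>Bs. G b (restrict x (XB b))) = pB z b0 (restrict x (XB b0)) * ln (qB z b0 (restrict x (XB b0))) * (\<Prod>b\<in>Bs - {b0}. pB z b (restrict x (XB b)))"
          by simp
        moreover have "(\<Prod>b\<in>Bs. pB z b (restrict x (XB b))) = pB z b0 (restrict x (XB b0)) * (\<Prod>b\<in>Bs - {b0}. pB z b (restrict x (XB b)))"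
          using that finBs by (simp add: prod.remove)
        ultimately show ?thesis unfolding P_def pur[of z x] by (simp add: ac_simps)
      qed
      then have "(\<Sum>x\<in>W. P x z * ln (qB z b0 (restrict x (XB b0))))
          = pz z * (\<Sum>x\<in>W. (\<lambda>y. \<Prod>i\<in>X'. pu z i (y i)) (restrict x X') * (\<Prod>b\<in>Bs. G b (restrict x (XB b))))"
        by (simp add: sum_distrib_left)
      also have "\<dots> = pz z * (\<Prod>b\<in>Bs. \<Sum>y\<in>PiE (XB b) D. G b y)"
        using fac[of "\<lambda>y. \<Prod>i\<in>X'. pu z i (y i)" G] norm'[OF that(1)] by (simp add: pur[symmetric])
      also have "(\<Prod>b\<in>Bs. \<Sum>y\<in>PiE (XB b) D. G b y) = (\<Sum>y\<in>PiE (XB b0) D. G b0 y) * (\<Prod>b\<in>Bs - {b0}. \<Sum>y\<in>PiE (XB b) D. G b y)"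
        using that finBs by (simp add: prod.remove)
      also have "(\<Prod>b\<in>Bs - {b0}. \<Sum>y\<in>PiE (XB b) D. G b y) = 1"
        using pB1 that by (intro prod.neutral) (auto simp: G_def)
      also have "(\<Sum>y\<in>PiE (XB b0) D. G b0 y) = - ce b0 z"
        by (simp add: G_def ce_def sum_negf)
      finally show ?thesis by (simp only: mult_1_right mult_minus_right)
    qed
    have blockB: "(\<Sum>x\<in>W. P x z * (ln (pz z) + (\<Sum>i\<in>X'. ln (pu z i (x i)))))
        = (\<Sum>x'\<in>PiE X' D. ?R (x', z) * ln (?R (x', z)))" if "z \<in> Zs" for z
    proof -
      define F where "F y = pz z * (\<Prod>i\<in>X'. pu z i (y i)) * (ln (pz z) + (\<Sum>i\<in>X'. ln (pu z i (y i))))" for y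
      have "P x z * (ln (pz z) + (\<Sum>i\<in>X'. ln (pu z i (x i)))) = F (restrict x X') * (\<Prod>b\<in>Bs. pB z b (restrict x (XB b)))" for x
      proof -
        have "(\<Sum>i\<in>X'. ln (pu z i (x i))) = (\<Sum>i\<in>X'. ln (pu z i (restrict x X' i)))"
          by (intro sum.cong) auto
        then show ?thesis unfolding P_def F_def pur[of z x] by (simp add: ac_simps)
      qed
      then have "(\<Sum>x\<in>W. P x z * (ln (pz z) + (\<Sum>i\<in>X'. ln (pu z i (x i)))))
          = (\<Sum>x\<in>W. F (restrict x X') * (\<Prod>b\<in>Bs. pB z b (restrict x (XB b))))" by simp
      also have "\<dots> = (\<Sum>y\<in>PiE X' D. F y)"
        unfolding fac using pB1 that by simp
      also have "\<dots> = (\<Sum>x'\<in>PiE X' D. ?R (x', z) * ln (?R (x', z)))"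
      proof (intro sum.cong refl)
        fix y assume y: "y \<in> PiE X' D"
        show "F y = ?R (y, z) * ln (?R (y, z))"
        proof (cases "?R (y, z) = 0")
          case True then show ?thesis by (simp add: F_def)
        next
          case nz: False
          have p1: "0 < pz z" using nz pz0[OF that] by (cases "pz z = 0") auto
          have p3: "0 < pu z i (y i)" if "i \<in> X'" for i
          proof -
            have "pu z i (y i) \<noteq> 0" using nz that finX' by auto
            moreover have "0 \<le> pu z i (y i)" using pu0 \<open>z \<in> Zs\<close> that y by (auto simp: PiE_iff)
            ultimately show ?thesis by linarith
          qed
          have "ln (?R (y, z)) = ln (pz z) + (\<Sum>i\<in>X'. ln (pu z i (y i)))"
          proof -
            have "0 < (\<Prod>i\<in>X'. pu z i (y i))" using p3 by (simp add: prod_pos)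
            then have "ln (?R (y, z)) = ln (pz z) + ln (\<Prod>i\<in>X'. pu z i (y i))" using p1 by (simp add: ln_mult)
            then show ?thesis using ln_prod[OF finX', of "\<lambda>i. pu z i (y i)"] p3 by force
          qed
          then show ?thesis by (simp add: F_def)
        qed
      qed
      finally show ?thesis .
    qed
    have real_eq: "(\<Sum>x\<in>W. \<Sum>z\<in>Zs. - P x z * ln (Q x z))
        = (\<Sum>b\<in>Bs. \<Sum>z\<in>Zs. pz z * ce b z) + (\<Sum>z\<in>Zs. \<Sum>x'\<in>PiE X' D. - ?R (x', z) * ln (?R (x', z)))"
    proof -
      have "(\<Sum>x\<in>W. \<Sum>z\<in>Zs. - P x z * ln (Q x z)) = (\<Sum>z\<in>Zs. \<Sum>x\<in>W. - P x z * ln (Q x z))"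
        by (rule sum.swap)
      also have "\<dots> = (\<Sum>z\<in>Zs. (\<Sum>b\<in>Bs. pz z * ce b z) + (\<Sum>x'\<in>PiE X' D. - ?R (x', z) * ln (?R (x', z))))"
      proof (intro sum.cong refl)
        fix z assume z: "z \<in> Zs"
        have "(\<Sum>x\<in>W. - P x z * ln (Q x z)) = - (\<Sum>x\<in>W. P x z * (ln (pz z) + (\<Sum>i\<in>X'. ln (pu z i (x i)))))
              - (\<Sum>b\<in>Bs. \<Sum>x\<in>W. P x z * ln (qB z b (restrict x (XB b))))"
        proof -
          have e1: "- P x z * ln (Q x z) = - (P x z * (ln (pz z) + (\<Sum>i\<in>X'. ln (pu z i (x i)))))
               - (\<Sum>b\<in>Bs. P x z * ln (qB z b (restrict x (XB b))))" if "x \<in> W" for x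
            using lnQ[OF that z] by (simp add: algebra_simps sum_distrib_left)
          have "(\<Sum>x\<in>W. - P x z * ln (Q x z)) = (\<Sum>x\<in>W. - (P x z * (ln (pz z) + (\<Sum>i\<in>X'. ln (pu z i (x i)))))
               - (\<Sum>b\<in>Bs. P x z * ln (qB z b (restrict x (XB b)))))"
            using e1 by (rule sum.cong[OF refl])
          also have "\<dots> = - (\<Sum>x\<in>W. P x z * (ln (pz z) + (\<Sum>i\<in>X'. ln (pu z i (x i)))))
              - (\<Sum>x\<in>W. \<Sum>b\<in>Bs. P x z * ln (qB z b (restrict x (XB b))))"
            by (simp only: sum_subtractf sum_negf)
          also have "(\<Sum>x\<in>W. \<Sum>b\<in>Bs. P x z * ln (qB z b (restrict x (XB b))))
              = (\<Sum>b\<in>Bs. \<Sum>x\<in>W. P x z * ln (qB z b (restrict x (XB b))))"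
            by (rule sum.swap)
          finally show ?thesis .
        qed
        also have "\<dots> = (\<Sum>b\<in>Bs. pz z * ce b z) + (\<Sum>x'\<in>PiE X' D. - ?R (x', z) * ln (?R (x', z)))"
          using blockA z blockB[OF z] by (simp add: sum_negf)
        finally show "(\<Sum>x\<in>W. - P x z * ln (Q x z)) = (\<Sum>b\<in>Bs. pz z * ce b z) + (\<Sum>x'\<in>PiE X' D. - ?R (x', z) * ln (?R (x', z)))" .
      qed
      also have "\<dots> = (\<Sum>b\<in>Bs. \<Sum>z\<in>Zs. pz z * ce b z) + (\<Sum>z\<in>Zs. \<Sum>x'\<in>PiE X' D. - ?R (x', z) * ln (?R (x', z)))"
        by (simp add: sum.distrib sum.swap[of _ Zs])
      finally show ?thesis .
    qed
    have "?LHS \<le> ereal (\<Sum>x\<in>W. \<Sum>z\<in>Zs. - P x z * ln (Q x z))" using step1 T_eq by simp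
    also have "\<dots> = ?S + ?E" unfolding S_eq E_eq real_eq by simp
    finally show ?thesis .
  qed
qed

end
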